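(* Let $\theta_1<\theta_2$, $f\in C^2([\theta_1,\theta_2])$, $\gamma>1$, and let $I\subseteq[\theta_1,\theta_2]$ be a closed interval. Suppose that, for positive constants $A$ and $\alpha$ with $\alpha<2\gamma-2$, one of the following holds: $f(s)f''(s)\ge A(s-\theta_1)^\alpha$ for all $s\in I$; or $f(s)f''(s)\ge A(\theta_2-s)^\alpha$ for all $s\in I$. Then there is a constant $C>0$ depending only on $A,\alpha,\theta_1,\theta_2,\gamma$ such that $\int_I|f(s)|^{-1/\gamma}\,ds\le C$. *)

theory Defs
  imports "HOL-Analysis.Analysis"
begin

definition C2_on_with :: "real \<Rightarrow> real \<Rightarrow> (real \<Rightarrow> real) \<Rightarrow> (real \<Rightarrow> real) \<Rightarrow> (real \<Rightarrow> real) \<Rightarrow> bool" where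
  "C2_on_with t1 t2 f f1 f2 \<longleftrightarrow>
     (\<forall>s\<in>{t1..t2}. (f has_real_derivative f1 s) (at s within {t1..t2})) \<and>
     (\<forall>s\<in>{t1..t2}. (f1 has_real_derivative f2 s) (at s within {t1..t2})) \<and>
     continuous_on {t1..t2} f2"

definition neg_pow_integrand :: "real \<Rightarrow> (real \<Rightarrow> real) \<Rightarrow> real \<Rightarrow> ennreal" where
  "neg_pow_integrand \<gamma> f s = (if f s = 0 then \<infinity> else ennreal (\<bar>f s\<bar> powr (- 1 / \<gamma>)))"

end

theory Submission
  imports Defs
begin

lemma deriv_lb:
  fixes g g' :: "real \<Rightarrow> real"
  assumes D: "\<forall>t\<in>{a..b}. (g has_real_derivative g' t) (at t within {a..b})"
    and xy: "a \<le> x" "x \<le> y" "y \<le> b" and m: "\<forall>t\<in>{x..y}. g' t \<ge> m"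
  shows "g y - g x \<ge> m * (y - x)"
proof (cases "x = y")
  case True then show ?thesis by simp
next
  case False
  then have "x < y" using xy by simp
  have "\<exists>z\<in>{x<..<y}. g y - g x = (*) (g' z) (y - x)"
  proof (rule mvt_simple[OF \<open>x < y\<close>])
    fix t assume "x \<le> t" "t \<le> y"
    then have "(g has_real_derivative g' t) (at t within {a..b})" using D xy by auto
    then have "(g has_real_derivative g' t) (at t within {x..y})"
      by (rule DERIV_subset) (use xy in auto)
    then show "(g has_derivative (*) (g' t)) (at t within {x..y})"
      by (simp add: has_field_derivative_def)
  qed
  then obtain z where z: "z \<in> {x<..<y}" "g y - g x = g' z * (y - x)" by auto
  have "g' z \<ge> m" using m z(1) by auto
  then show ?thesis using z \<open>x < y\<close> by (simp add: mult_right_mono)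
qed

lemma deriv_ub:
  fixes g g' :: "real \<Rightarrow> real"
  assumes D: "\<forall>t\<in>{a..b}. (g has_real_derivative g' t) (at t within {a..b})"
    and xy: "a \<le> x" "x \<le> y" "y \<le> b" and m: "\<forall>t\<in>{x..y}. g' t \<le> M"
  shows "g y - g x \<le> M * (y - x)"
proof -
  have D': "\<forall>t\<in>{a..b}. ((\<lambda>t. - g t) has_real_derivative - g' t) (at t within {a..b})"
    using D by (auto intro: derivative_intros)
  have "(- g y) - (- g x) \<ge> (- M) * (y - x)"
    by (rule deriv_lb[OF D' xy]) (use m in auto)
  then show ?thesis by simp
qed


lemma min_lb_right:
  fixes ph ps ch :: "real \<Rightarrow> real"
  assumes D1: "\<forall>t\<in>{a..b}. (ph has_real_derivative ps t) (at t within {a..b})"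
    and D2: "\<forall>t\<in>{a..b}. (ps has_real_derivative ch t) (at t within {a..b})"
    and chi: "\<forall>t\<in>{a..b}. ch t \<ge> 0" and phi: "\<forall>t\<in>{a..b}. ph t \<ge> 0"
    and s0: "s0 \<in> {a..b}" and mn: "\<forall>t\<in>{a..b}. ph s0 \<le> ph t"
    and s: "s \<in> {a..b}" "s0 < s"
    and m: "\<forall>t\<in>{s0 + (s-s0)/2 .. s0 + 3*(s-s0)/4}. ch t \<ge> m"
  shows "ph s \<ge> m * (s-s0)^2/16"
proof -
  define q where "q = s0 + (s-s0)/2"
  define r where "r = s0 + 3*(s-s0)/4"
  have qr: "a \<le> s0" "s0 < q" "q < r" "r < s" "s \<le> b" using s s0 by (auto simp: q_def r_def field_simps)
  have m': "\<forall>t\<in>{q..r}. ch t \<ge> m" using m by (simp add: q_def r_def)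
  have psiq: "ps q \<ge> 0"
  proof (rule ccontr)
    assume "\<not> ps q \<ge> 0"
    then have neg: "ps q < 0" by simp
    have "\<forall>t\<in>{s0..q}. ps t \<le> ps q"
    proof
      fix t assume t: "t \<in> {s0..q}"
      have "ps q - ps t \<ge> 0 * (q - t)"
        by (rule deriv_lb[OF D2]) (use t qr chi in auto)
      then show "ps t \<le> ps q" by simp
    qed
    then have "ph q - ph s0 \<le> ps q * (q - s0)"
      by (intro deriv_ub[OF D1]) (use qr in auto)
    also have "\<dots> < 0" using neg qr by (simp add: mult_neg_pos)
    finally have "ph q < ph s0" by simp
    moreover have "ph s0 \<le> ph q" using mn qr by auto
    ultimately show False by simp
  qed
  have "ps r - ps q \<ge> m * (r - q)"
    by (rule deriv_lb[OF D2]) (use qr m' in auto)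
  then have psir: "ps r \<ge> m * (r - q)" using psiq by simp
  have "\<forall>t\<in>{r..s}. ps t \<ge> ps r"
  proof
    fix t assume t: "t \<in> {r..s}"
    have "ps t - ps r \<ge> 0 * (t - r)"
      by (rule deriv_lb[OF D2]) (use t qr chi in auto)
    then show "ps t \<ge> ps r" by simp
  qed
  then have "ph s - ph r \<ge> ps r * (s - r)"
    by (intro deriv_lb[OF D1]) (use qr in auto)
  moreover have "ps r * (s - r) \<ge> m * (r - q) * (s - r)"
    using psir qr by (intro mult_right_mono) auto
  moreover have "ph r \<ge> 0" using phi qr by auto
  moreover have "m * (r - q) * (s - r) = m * (s-s0)^2/16"
    by (simp add: q_def r_def power2_eq_square field_simps)
  ultimately show ?thesis by linarith
qed

lemma min_lb_left:
  fixes ph ps ch :: "real \<Rightarrow> real"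
  assumes D1: "\<forall>t\<in>{a..b}. (ph has_real_derivative ps t) (at t within {a..b})"
    and D2: "\<forall>t\<in>{a..b}. (ps has_real_derivative ch t) (at t within {a..b})"
    and chi: "\<forall>t\<in>{a..b}. ch t \<ge> 0" and phi: "\<forall>t\<in>{a..b}. ph t \<ge> 0"
    and s0: "s0 \<in> {a..b}" and mn: "\<forall>t\<in>{a..b}. ph s0 \<le> ph t"
    and s: "s \<in> {a..b}" "s < s0"
    and m: "\<forall>t\<in>{s + (s0-s)/4 .. s + (s0-s)/2}. ch t \<ge> m"
  shows "ph s \<ge> m * (s-s0)^2/16"
proof -
  define q where "q = s + (s0-s)/2"
  define r where "r = s + (s0-s)/4"
  have qr: "a \<le> s" "s < r" "r < q" "q < s0" "s0 \<le> b" using s s0 by (auto simp: q_def r_def field_simps)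
  have m': "\<forall>t\<in>{r..q}. ch t \<ge> m" using m by (simp add: q_def r_def)
  have psiq: "ps q \<le> 0"
  proof (rule ccontr)
    assume "\<not> ps q \<le> 0"
    then have pos: "ps q > 0" by simp
    have "\<forall>t\<in>{q..s0}. ps t \<ge> ps q"
    proof
      fix t assume t: "t \<in> {q..s0}"
      have "ps t - ps q \<ge> 0 * (t - q)"
        by (rule deriv_lb[OF D2]) (use t qr chi in auto)
      then show "ps t \<ge> ps q" by simp
    qed
    then have "ph s0 - ph q \<ge> ps q * (s0 - q)"
      by (intro deriv_lb[OF D1]) (use qr in auto)
    moreover have "ps q * (s0 - q) > 0" using pos qr by simp
    moreover have "ph s0 \<le> ph q" using mn qr by auto
    ultimately show False by simp
  qed
  have "ps q - ps r \<ge> m * (q - r)"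
    by (rule deriv_lb[OF D2]) (use qr m' in auto)
  then have psir: "ps r \<le> - (m * (q - r))" using psiq by simp
  have "\<forall>t\<in>{s..r}. ps t \<le> ps r"
  proof
    fix t assume t: "t \<in> {s..r}"
    have "ps r - ps t \<ge> 0 * (r - t)"
      by (rule deriv_lb[OF D2]) (use t qr chi in auto)
    then show "ps t \<le> ps r" by simp
  qed
  then have "ph r - ph s \<le> ps r * (r - s)"
    by (intro deriv_ub[OF D1]) (use qr in auto)
  moreover have "ps r * (r - s) \<le> - (m * (q - r) * (r - s))"
    using mult_right_mono[OF psir, of "r - s"] qr by simp
  moreover have "ph r \<ge> 0" using phi qr by auto
  moreover have "m * (q - r) * (r - s) = m * (s-s0)^2/16"
    by (simp add: q_def r_def power2_eq_square field_simps)
  ultimately show ?thesis by linarith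
qed


lemma pw_case1:
  fixes ph ps ch :: "real \<Rightarrow> real"
  assumes D1: "\<forall>t\<in>{a..b}. (ph has_real_derivative ps t) (at t within {a..b})"
    and D2: "\<forall>t\<in>{a..b}. (ps has_real_derivative ch t) (at t within {a..b})"
    and chi: "\<forall>t\<in>{a..b}. ch t \<ge> 0" and phi: "\<forall>t\<in>{a..b}. ph t \<ge> 0"
    and s0: "s0 \<in> {a..b}" and mn: "\<forall>t\<in>{a..b}. ph s0 \<le> ph t"
    and th: "\<theta>1 \<le> a" "\<alpha> \<ge> 0" "A > 0"
    and chw: "\<forall>t\<in>{a..b}. ch t \<ge> 2 * A * (t - \<theta>1) powr \<alpha>"
    and s: "s \<in> {a..b}" "s \<noteq> s0"
  shows "ph s \<ge> A / (8 * 2 powr \<alpha>) * (s - s0)^2 * (s - \<theta>1) powr \<alpha>"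
proof (cases "s0 < s")
  case True
  define m where "m = 2 * A * ((s - \<theta>1) / 2) powr \<alpha>"
  have "\<forall>t\<in>{s0 + (s-s0)/2 .. s0 + 3*(s-s0)/4}. ch t \<ge> m"
  proof
    fix t assume t: "t \<in> {s0 + (s-s0)/2 .. s0 + 3*(s-s0)/4}"
    then have ta: "t \<in> {a..b}" using s s0 True by (auto simp: field_simps)
    have "((s - \<theta>1) / 2) powr \<alpha> \<le> (t - \<theta>1) powr \<alpha>"
      by (rule powr_mono2) (use t s s0 th True in \<open>auto simp: field_simps\<close>)
    then have "m \<le> 2 * A * (t - \<theta>1) powr \<alpha>" unfolding m_def using th by simp
    also have "\<dots> \<le> ch t" using chw ta by auto
    finally show "ch t \<ge> m" .
  qed
  from min_lb_right[OF D1 D2 chi phi s0 mn s(1) True this]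
  have "ph s \<ge> m * (s - s0)^2/16" .
  moreover have "m = 2 * A * (s - \<theta>1) powr \<alpha> / 2 powr \<alpha>"
    unfolding m_def using s th by (subst powr_divide) auto
  ultimately show ?thesis by (simp add: field_simps)
next
  case False
  then have lt: "s < s0" using s by simp
  define m where "m = 2 * A * (s - \<theta>1) powr \<alpha>"
  have "\<forall>t\<in>{s + (s0-s)/4 .. s + (s0-s)/2}. ch t \<ge> m"
  proof
    fix t assume t: "t \<in> {s + (s0-s)/4 .. s + (s0-s)/2}"
    then have ta: "t \<in> {a..b}" using s s0 lt by (auto simp: field_simps)
    have "(s - \<theta>1) powr \<alpha> \<le> (t - \<theta>1) powr \<alpha>"
      by (rule powr_mono2) (use t s s0 th lt in \<open>auto simp: field_simps\<close>)
    then have "m \<le> 2 * A * (t - \<theta>1) powr \<alpha>" unfolding m_def using th by simp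
    also have "\<dots> \<le> ch t" using chw ta by auto
    finally show "ch t \<ge> m" .
  qed
  from min_lb_left[OF D1 D2 chi phi s0 mn s(1) lt this]
  have 1: "ph s \<ge> m * (s - s0)^2/16" .
  have c1: "2 powr \<alpha> \<ge> 1" by (rule ge_one_powr_ge_zero) (use th in auto)
  define X where "X = A * (s - s0)^2 * (s - \<theta>1) powr \<alpha>"
  have Xnn: "X \<ge> 0" unfolding X_def using th by simp
  have "X \<le> X * 2 powr \<alpha>" using mult_left_mono[OF c1 Xnn] by simp
  then have "X / 2 powr \<alpha> \<le> X" by (simp add: divide_le_eq)
  moreover have "A / (8 * 2 powr \<alpha>) * (s - s0)^2 * (s - \<theta>1) powr \<alpha> = X / 2 powr \<alpha> / 8"
    unfolding X_def by simp
  moreover have "m * (s - s0)^2/16 = X / 8" unfolding X_def m_def by simp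
  ultimately have "A / (8 * 2 powr \<alpha>) * (s - s0)^2 * (s - \<theta>1) powr \<alpha> \<le> m * (s - s0)^2/16"
    by simp
  with 1 show ?thesis by linarith
qed

lemma pw_case2:
  fixes ph ps ch :: "real \<Rightarrow> real"
  assumes D1: "\<forall>t\<in>{a..b}. (ph has_real_derivative ps t) (at t within {a..b})"
    and D2: "\<forall>t\<in>{a..b}. (ps has_real_derivative ch t) (at t within {a..b})"
    and chi: "\<forall>t\<in>{a..b}. ch t \<ge> 0" and phi: "\<forall>t\<in>{a..b}. ph t \<ge> 0"
    and s0: "s0 \<in> {a..b}" and mn: "\<forall>t\<in>{a..b}. ph s0 \<le> ph t"
    and th: "b \<le> \<theta>2" "\<alpha> \<ge> 0" "A > 0"
    and chw: "\<forall>t\<in>{a..b}. ch t \<ge> 2 * A * (\<theta>2 - t) powr \<alpha>"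
    and s: "s \<in> {a..b}" "s \<noteq> s0"
  shows "ph s \<ge> A / (8 * 2 powr \<alpha>) * (s - s0)^2 * (\<theta>2 - s) powr \<alpha>"
proof (cases "s < s0")
  case True
  define m where "m = 2 * A * ((\<theta>2 - s) / 2) powr \<alpha>"
  have "\<forall>t\<in>{s + (s0-s)/4 .. s + (s0-s)/2}. ch t \<ge> m"
  proof
    fix t assume t: "t \<in> {s + (s0-s)/4 .. s + (s0-s)/2}"
    then have ta: "t \<in> {a..b}" using s s0 True by (auto simp: field_simps)
    have "((\<theta>2 - s) / 2) powr \<alpha> \<le> (\<theta>2 - t) powr \<alpha>"
      by (rule powr_mono2) (use t s s0 th True in \<open>auto simp: field_simps\<close>)
    then have "m \<le> 2 * A * (\<theta>2 - t) powr \<alpha>" unfolding m_def using th by simp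
    also have "\<dots> \<le> ch t" using chw ta by auto
    finally show "ch t \<ge> m" .
  qed
  from min_lb_left[OF D1 D2 chi phi s0 mn s(1) True this]
  have "ph s \<ge> m * (s - s0)^2/16" .
  moreover have "m = 2 * A * (\<theta>2 - s) powr \<alpha> / 2 powr \<alpha>"
    unfolding m_def using s th by (subst powr_divide) auto
  ultimately show ?thesis by (simp add: field_simps)
next
  case False
  then have lt: "s0 < s" using s by simp
  define m where "m = 2 * A * (\<theta>2 - s) powr \<alpha>"
  have "\<forall>t\<in>{s0 + (s-s0)/2 .. s0 + 3*(s-s0)/4}. ch t \<ge> m"
  proof
    fix t assume t: "t \<in> {s0 + (s-s0)/2 .. s0 + 3*(s-s0)/4}"
    then have ta: "t \<in> {a..b}" using s s0 lt by (auto simp: field_simps)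
    have "(\<theta>2 - s) powr \<alpha> \<le> (\<theta>2 - t) powr \<alpha>"
      by (rule powr_mono2) (use t s s0 th lt in \<open>auto simp: field_simps\<close>)
    then have "m \<le> 2 * A * (\<theta>2 - t) powr \<alpha>" unfolding m_def using th by simp
    also have "\<dots> \<le> ch t" using chw ta by auto
    finally show "ch t \<ge> m" .
  qed
  from min_lb_right[OF D1 D2 chi phi s0 mn s(1) lt this]
  have 1: "ph s \<ge> m * (s - s0)^2/16" .
  have c1: "2 powr \<alpha> \<ge> 1" by (rule ge_one_powr_ge_zero) (use th in auto)
  define X where "X = A * (s - s0)^2 * (\<theta>2 - s) powr \<alpha>"
  have Xnn: "X \<ge> 0" unfolding X_def using th by simp
  have "X \<le> X * 2 powr \<alpha>" using mult_left_mono[OF c1 Xnn] by simp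
  then have "X / 2 powr \<alpha> \<le> X" by (simp add: divide_le_eq)
  moreover have "A / (8 * 2 powr \<alpha>) * (s - s0)^2 * (\<theta>2 - s) powr \<alpha> = X / 2 powr \<alpha> / 8"
    unfolding X_def by simp
  moreover have "m * (s - s0)^2/16 = X / 8" unfolding X_def m_def by simp
  ultimately have "A / (8 * 2 powr \<alpha>) * (s - s0)^2 * (\<theta>2 - s) powr \<alpha> \<le> m * (s - s0)^2/16"
    by simp
  with 1 show ?thesis by linarith
qed


definition Gf :: "real \<Rightarrow> real \<Rightarrow> real \<Rightarrow> real" where
  "Gf L r x = indicator {0..L} x * x powr (- r)"

lemma Gf_nonneg: "Gf L r x \<ge> 0" by (simp add: Gf_def)

lemma Gf_meas[measurable]: "Gf L r \<in> borel_measurable borel"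
  unfolding Gf_def by measurable

lemma int_Gf:
  assumes "r < 1" "L \<ge> 0"
  shows "(\<integral>\<^sup>+x. ennreal (Gf L r x) \<partial>lborel) = ennreal (L powr (1 - r) / (1 - r))"
proof -
  have "((\<lambda>x. x powr (- r)) has_integral (L powr (- r + 1) / (- r + 1))) {0..L}"
    by (rule has_integral_powr_from_0) (use assms in auto)
  from nn_integral_has_integral_lebesgue[OF _ this]
  have "integral\<^sup>N lborel (\<lambda>x. indicator {0..L} x * x powr (- r)) = ennreal (L powr (- r + 1) / (- r + 1))"
    by simp
  then show ?thesis by (simp add: Gf_def add.commute)
qed

lemma int_Gf_shift:
  assumes "c = 1 \<or> c = -1" "r < 1" "L \<ge> 0"
  shows "(\<integral>\<^sup>+x. ennreal (Gf L r (t + c * x)) \<partial>lborel) = ennreal (L powr (1 - r) / (1 - r))"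
proof -
  have "(\<integral>\<^sup>+x. ennreal (Gf L r x) \<partial>lborel) = ennreal \<bar>c\<bar> * (\<integral>\<^sup>+x. ennreal (Gf L r (t + c * x)) \<partial>lborel)"
    by (rule nn_integral_real_affine) (use assms in auto)
  moreover have "\<bar>c\<bar> = 1" using assms by auto
  ultimately show ?thesis using int_Gf[OF assms(2,3)] by simp
qed

lemma sq_powr: "x > 0 \<Longrightarrow> ((x::real) * x) powr c = x powr (2 * c)"
  by (simp add: powr_mult powr_add[symmetric])

lemma mixed_powr:
  fixes x y p q :: real
  assumes "x > 0" "y > 0" "p \<ge> 0" "q \<ge> 0"
  shows "x powr (- p) * y powr (- q) \<le> x powr (- (p + q)) + y powr (- (p + q))"
proof (cases "x \<le> y")
  case True
  have "y powr (- q) \<le> x powr (- q)" by (rule powr_mono2') (use assms True in auto)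
  then have "x powr (- p) * y powr (- q) \<le> x powr (- p) * x powr (- q)"
    by (intro mult_left_mono) auto
  also have "\<dots> = x powr (- (p + q))" by (simp add: powr_add[symmetric])
  finally show ?thesis by (smt (verit) powr_ge_zero)
next
  case False
  have "x powr (- p) \<le> y powr (- p)" by (rule powr_mono2') (use assms False in auto)
  then have "x powr (- p) * y powr (- q) \<le> y powr (- p) * y powr (- q)"
    by (intro mult_right_mono) auto
  also have "\<dots> = y powr (- (p + q))" by (simp add: powr_add[symmetric])
  finally show ?thesis by (smt (verit) powr_ge_zero)
qed



lemma integrand_bound:
  fixes y d e K \<gamma> \<alpha> :: real
  assumes g: "\<gamma> > 0" and K: "K > 0" and al: "\<alpha> \<ge> 0" and e: "e > 0" and d: "d \<noteq> 0"
    and y: "y * y \<ge> K * d^2 * e powr \<alpha>"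
  shows "y \<noteq> 0" "\<bar>y\<bar> powr (- 1 / \<gamma>) \<le> K powr (- 1 / (2 * \<gamma>)) *
      (\<bar>d\<bar> powr (- (1 / \<gamma> + \<alpha> / (2 * \<gamma>))) + e powr (- (1 / \<gamma> + \<alpha> / (2 * \<gamma>))))"
proof -
  define X where "X = K * d^2 * e powr \<alpha>"
  have Xpos: "X > 0" unfolding X_def using K e d by simp
  then show "y \<noteq> 0" using y unfolding X_def by auto
  then have ay: "\<bar>y\<bar> > 0" by simp
  define c where "c = - 1 / (2 * \<gamma>)"
  have c0: "c \<le> 0" unfolding c_def using g by simp
  have "\<bar>y\<bar> powr (- 1 / \<gamma>) = (\<bar>y\<bar> * \<bar>y\<bar>) powr c"
    using sq_powr[OF ay, of c] g unfolding c_def by simp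
  also have "\<dots> = (y * y) powr c" by (simp add: abs_mult[symmetric])
  also have "\<dots> \<le> X powr c"
    by (rule powr_mono2'[OF c0 Xpos]) (use y in \<open>simp add: X_def\<close>)
  also have "X powr c = K powr c * (\<bar>d\<bar> * \<bar>d\<bar>) powr c * (e powr \<alpha>) powr c"
    unfolding X_def using K e
    by (simp add: powr_mult power2_eq_square abs_mult[symmetric])
  also have "\<dots> = K powr c * (\<bar>d\<bar> powr (2 * c) * e powr (\<alpha> * c))"
  proof -
    have dd: "(\<bar>d\<bar> * \<bar>d\<bar>) powr c = \<bar>d\<bar> powr (2 * c)" by (rule sq_powr) (use d in simp)
    show ?thesis by (simp only: dd powr_powr mult.assoc)
  qed
  also have "\<dots> = K powr c * (\<bar>d\<bar> powr (- (1 / \<gamma>)) * e powr (- (\<alpha> / (2 * \<gamma>))))"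
    using g by (simp add: c_def)
  also have "\<dots> \<le> K powr c * (\<bar>d\<bar> powr (- (1 / \<gamma> + \<alpha> / (2 * \<gamma>))) + e powr (- (1 / \<gamma> + \<alpha> / (2 * \<gamma>))))"
    by (intro mult_left_mono mixed_powr) (use d e g al in auto)
  finally show "\<bar>y\<bar> powr (- 1 / \<gamma>) \<le> K powr (- 1 / (2 * \<gamma>)) *
      (\<bar>d\<bar> powr (- (1 / \<gamma> + \<alpha> / (2 * \<gamma>))) + e powr (- (1 / \<gamma> + \<alpha> / (2 * \<gamma>))))"
    unfolding c_def by simp
qed

lemma Gf_d:
  assumes "s \<in> {\<theta>1..\<theta>2}" "s0 \<in> {\<theta>1..\<theta>2}"
  shows "\<bar>s - s0\<bar> powr (- r) \<le> Gf (\<theta>2 - \<theta>1) r (- s0 + 1 * s) + Gf (\<theta>2 - \<theta>1) r (s0 + - 1 * s)"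
  using assms Gf_nonneg[of "\<theta>2 - \<theta>1" r "- s0 + 1 * s"] Gf_nonneg[of "\<theta>2 - \<theta>1" r "s0 + - 1 * s"]
  by (cases "s0 \<le> s") (auto simp: Gf_def indicator_def)

lemma Gf_e:
  assumes "s \<in> {\<theta>1..\<theta>2}" "e = s - \<theta>1 \<or> e = \<theta>2 - s"
  shows "e powr (- r) \<le> Gf (\<theta>2 - \<theta>1) r (- \<theta>1 + 1 * s) + Gf (\<theta>2 - \<theta>1) r (\<theta>2 + - 1 * s)"
  using assms Gf_nonneg[of "\<theta>2 - \<theta>1" r "- \<theta>1 + 1 * s"] Gf_nonneg[of "\<theta>2 - \<theta>1" r "\<theta>2 + - 1 * s"]
  by (auto simp: Gf_def indicator_def)

theorem lemma3p6:
  fixes \<theta>1 \<theta>2 \<gamma> A \<alpha> :: real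
  assumes "\<theta>1 < \<theta>2" and "\<gamma> > 1" and "A > 0" and "\<alpha> > 0" and "\<alpha> < 2 * \<gamma> - 2"
  shows "\<exists>C>0. \<forall>(f :: real \<Rightarrow> real) f1 f2 (a :: real) b.
            C2_on_with \<theta>1 \<theta>2 f f1 f2 \<longrightarrow> \<theta>1 \<le> a \<longrightarrow> b \<le> \<theta>2 \<longrightarrow>
            ((\<forall>s\<in>{a..b}. f s * f2 s \<ge> A * (s - \<theta>1) powr \<alpha>) \<or>
             (\<forall>s\<in>{a..b}. f s * f2 s \<ge> A * (\<theta>2 - s) powr \<alpha>)) \<longrightarrow>
            (\<integral>\<^sup>+ s \<in> {a..b}. neg_pow_integrand \<gamma> f s \<partial>lborel) \<le> ennreal C"
proof -
  define r where "r = 1 / \<gamma> + \<alpha> / (2 * \<gamma>)"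
  define L where "L = \<theta>2 - \<theta>1"
  define K where "K = A / (8 * 2 powr \<alpha>)"
  define Kp where "Kp = K powr (- 1 / (2 * \<gamma>))"
  define I0 where "I0 = L powr (1 - r) / (1 - r)"
  define C where "C = Kp * (4 * I0) + 1"
  have r1: "r < 1"
  proof -
    have "r = (2 + \<alpha>) / (2 * \<gamma>)" unfolding r_def using assms by (simp add: field_simps)
    also have "\<dots> < 1" using assms by (simp add: divide_less_eq)
    finally show ?thesis .
  qed
  have L0: "L \<ge> 0" unfolding L_def using assms by simp
  have K0: "K > 0" unfolding K_def using assms by simp
  have Kp0: "Kp > 0" unfolding Kp_def using K0 by simp
  have I00: "I0 \<ge> 0" unfolding I0_def using r1 L0 by simp
  have C0: "C > 0" unfolding C_def using Kp0 I00 by (smt (verit) mult_nonneg_nonneg)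
  show ?thesis
  proof (intro exI[of _ C] conjI allI impI)
    show "C > 0" by (rule C0)
    fix f f1 f2 :: "real \<Rightarrow> real" and a b :: real
    assume C2: "C2_on_with \<theta>1 \<theta>2 f f1 f2" and a: "\<theta>1 \<le> a" and b: "b \<le> \<theta>2"
      and cond: "(\<forall>s\<in>{a..b}. f s * f2 s \<ge> A * (s - \<theta>1) powr \<alpha>) \<or>
             (\<forall>s\<in>{a..b}. f s * f2 s \<ge> A * (\<theta>2 - s) powr \<alpha>)"
    show "(\<integral>\<^sup>+ s \<in> {a..b}. neg_pow_integrand \<gamma> f s \<partial>lborel) \<le> ennreal C"
    proof (cases "a \<le> b")
      case False
      then have "{a..b} = {}" by auto
      then show ?thesis by simp
    next
      case True
      have sub: "{a..b} \<subseteq> {\<theta>1..\<theta>2}" using a b by auto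
      have fD: "\<forall>t\<in>{a..b}. (f has_real_derivative f1 t) (at t within {a..b})"
      proof
        fix t assume t: "t \<in> {a..b}"
        then have "t \<in> {\<theta>1..\<theta>2}" using sub by auto
        then have "(f has_real_derivative f1 t) (at t within {\<theta>1..\<theta>2})"
          using C2 unfolding C2_on_with_def by auto
        then show "(f has_real_derivative f1 t) (at t within {a..b})"
          by (rule DERIV_subset) (rule sub)
      qed
      have f1D: "\<forall>t\<in>{a..b}. (f1 has_real_derivative f2 t) (at t within {a..b})"
      proof
        fix t assume t: "t \<in> {a..b}"
        then have "t \<in> {\<theta>1..\<theta>2}" using sub by auto
        then have "(f1 has_real_derivative f2 t) (at t within {\<theta>1..\<theta>2})"
          using C2 unfolding C2_on_with_def by auto
        then show "(f1 has_real_derivative f2 t) (at t within {a..b})"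
          by (rule DERIV_subset) (rule sub)
      qed
      define ph where "ph = (\<lambda>t. f t * f t)"
      define ps where "ps = (\<lambda>t. 2 * (f t * f1 t))"
      define ch where "ch = (\<lambda>t. 2 * (f1 t * f1 t + f t * f2 t))"
      have D1: "\<forall>t\<in>{a..b}. (ph has_real_derivative ps t) (at t within {a..b})"
      proof
        fix t assume t: "t \<in> {a..b}"
        show "(ph has_real_derivative ps t) (at t within {a..b})"
          unfolding ph_def
          by (rule DERIV_cong[OF DERIV_mult[OF fD[rule_format, OF t] fD[rule_format, OF t]]])
             (simp add: ps_def algebra_simps)
      qed
      have D2: "\<forall>t\<in>{a..b}. (ps has_real_derivative ch t) (at t within {a..b})"
      proof
        fix t assume t: "t \<in> {a..b}"
        have "((\<lambda>t. f t * f1 t) has_real_derivative (f1 t * f1 t + f t * f2 t)) (at t within {a..b})"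
          by (rule DERIV_cong[OF DERIV_mult[OF fD[rule_format, OF t] f1D[rule_format, OF t]]])
             (simp add: algebra_simps)
        then show "(ps has_real_derivative ch t) (at t within {a..b})"
          unfolding ps_def ch_def by (intro DERIV_cmult)
      qed
      have w1: "(t - \<theta>1) powr \<alpha> \<ge> 0" "(\<theta>2 - t) powr \<alpha> \<ge> 0" for t by simp_all
      have chff: "ch t \<ge> 2 * (f t * f2 t)" for t unfolding ch_def by simp
      have chi: "\<forall>t\<in>{a..b}. ch t \<ge> 0"
      proof
        fix t assume t: "t \<in> {a..b}"
        have "A * (t - \<theta>1) powr \<alpha> \<ge> 0" "A * (\<theta>2 - t) powr \<alpha> \<ge> 0" using assms(3) by simp_all
        moreover have "f t * f2 t \<ge> A * (t - \<theta>1) powr \<alpha> \<or> f t * f2 t \<ge> A * (\<theta>2 - t) powr \<alpha>"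
          using cond t by blast
        ultimately have "f t * f2 t \<ge> 0" by linarith
        then show "ch t \<ge> 0" using chff[of t] by simp
      qed
      have phi: "\<forall>t\<in>{a..b}. ph t \<ge> 0" unfolding ph_def by simp
      have "continuous_on {a..b} ph" using D1 by (intro DERIV_continuous_on) auto
      then obtain s0 where s0: "s0 \<in> {a..b}" and mn: "\<forall>t\<in>{a..b}. ph s0 \<le> ph t"
        using continuous_attains_inf[of "{a..b}" ph] True by auto
      have key: "\<exists>e. (e = s - \<theta>1 \<or> e = \<theta>2 - s) \<and> ph s \<ge> K * (s - s0)^2 * e powr \<alpha>"
        if s: "s \<in> {a..b}" "s \<noteq> s0" for s
        using cond
      proof
        assume c1: "\<forall>s\<in>{a..b}. f s * f2 s \<ge> A * (s - \<theta>1) powr \<alpha>"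
        have "\<forall>t\<in>{a..b}. ch t \<ge> 2 * A * (t - \<theta>1) powr \<alpha>"
        proof
          fix t assume "t \<in> {a..b}"
          then have "f t * f2 t \<ge> A * (t - \<theta>1) powr \<alpha>" using c1 by blast
          then show "ch t \<ge> 2 * A * (t - \<theta>1) powr \<alpha>" using chff[of t] by linarith
        qed
        from pw_case1[OF D1 D2 chi phi s0 mn a _ assms(3) this s] assms(4)
        show ?thesis unfolding K_def by auto
      next
        assume c2: "\<forall>s\<in>{a..b}. f s * f2 s \<ge> A * (\<theta>2 - s) powr \<alpha>"
        have "\<forall>t\<in>{a..b}. ch t \<ge> 2 * A * (\<theta>2 - t) powr \<alpha>"
        proof
          fix t assume "t \<in> {a..b}"
          then have "f t * f2 t \<ge> A * (\<theta>2 - t) powr \<alpha>" using c2 by blast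
          then show "ch t \<ge> 2 * A * (\<theta>2 - t) powr \<alpha>" using chff[of t] by linarith
        qed
        from pw_case2[OF D1 D2 chi phi s0 mn b _ assms(3) this s] assms(4)
        show ?thesis unfolding K_def by auto
      qed
      define G where "G = Gf L r"
      define g1 where "g1 = (\<lambda>s. ennreal (G (- s0 + 1 * s)))"
      define g2 where "g2 = (\<lambda>s. ennreal (G (s0 + - 1 * s)))"
      define g3 where "g3 = (\<lambda>s. ennreal (G (- \<theta>1 + 1 * s)))"
      define g4 where "g4 = (\<lambda>s. ennreal (G (\<theta>2 + - 1 * s)))"
      have m1[measurable]: "g1 \<in> borel_measurable lborel" unfolding g1_def G_def by measurable
      have m2[measurable]: "g2 \<in> borel_measurable lborel" unfolding g2_def G_def by measurable
      have m3[measurable]: "g3 \<in> borel_measurable lborel" unfolding g3_def G_def by measurable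
      have m4[measurable]: "g4 \<in> borel_measurable lborel" unfolding g4_def G_def by measurable
      have i1: "integral\<^sup>N lborel g1 = ennreal I0" unfolding g1_def G_def I0_def
        by (rule int_Gf_shift) (use r1 L0 in auto)
      have i2: "integral\<^sup>N lborel g2 = ennreal I0" unfolding g2_def G_def I0_def
        by (rule int_Gf_shift) (use r1 L0 in auto)
      have i3: "integral\<^sup>N lborel g3 = ennreal I0" unfolding g3_def G_def I0_def
        by (rule int_Gf_shift) (use r1 L0 in auto)
      have i4: "integral\<^sup>N lborel g4 = ennreal I0" unfolding g4_def G_def I0_def
        by (rule int_Gf_shift) (use r1 L0 in auto)
      have pt: "neg_pow_integrand \<gamma> f s * indicator {a..b} s \<le>
          ennreal Kp * (g1 s + g2 s + g3 s + g4 s)"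
        if ns: "s \<noteq> s0" "s \<noteq> \<theta>1" "s \<noteq> \<theta>2" for s
      proof (cases "s \<in> {a..b}")
        case False then show ?thesis by simp
      next
        case sin: True
        obtain e where e: "e = s - \<theta>1 \<or> e = \<theta>2 - s" and pe: "ph s \<ge> K * (s - s0)^2 * e powr \<alpha>"
          using key[OF sin ns(1)] by blast
        have epos: "e > 0" using e sin a b ns by auto
        have ds: "s - s0 \<noteq> 0" using ns by simp
        have ib: "f s \<noteq> 0" "\<bar>f s\<bar> powr (- 1 / \<gamma>) \<le> Kp * (\<bar>s - s0\<bar> powr (- r) + e powr (- r))"
        proof -
          have gg: "\<gamma> > 0" "\<alpha> \<ge> 0" using assms by auto
          have pe': "f s * f s \<ge> K * (s - s0)^2 * e powr \<alpha>" using pe unfolding ph_def .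
          show "f s \<noteq> 0" "\<bar>f s\<bar> powr (- 1 / \<gamma>) \<le> Kp * (\<bar>s - s0\<bar> powr (- r) + e powr (- r))"
            using integrand_bound[OF gg(1) K0 gg(2) epos ds pe'] unfolding Kp_def r_def by auto
        qed
        have g1: "\<bar>s - s0\<bar> powr (- r) \<le> G (- s0 + 1 * s) + G (s0 + - 1 * s)"
          unfolding G_def L_def by (rule Gf_d) (use sin s0 a b in auto)
        have g2: "e powr (- r) \<le> G (- \<theta>1 + 1 * s) + G (\<theta>2 + - 1 * s)"
          unfolding G_def L_def by (rule Gf_e) (use sin a b e in auto)
        have "\<bar>s - s0\<bar> powr (- r) + e powr (- r) \<le> G (- s0 + 1 * s) + G (s0 + - 1 * s)
             + G (- \<theta>1 + 1 * s) + G (\<theta>2 + - 1 * s)" using g1 g2 by linarith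
        then have "Kp * (\<bar>s - s0\<bar> powr (- r) + e powr (- r)) \<le> Kp * (G (- s0 + 1 * s) + G (s0 + - 1 * s)
             + G (- \<theta>1 + 1 * s) + G (\<theta>2 + - 1 * s))"
          using Kp0 by (intro mult_left_mono) auto
        with ib(2) have "\<bar>f s\<bar> powr (- 1 / \<gamma>) \<le> Kp * (G (- s0 + 1 * s) + G (s0 + - 1 * s)
             + G (- \<theta>1 + 1 * s) + G (\<theta>2 + - 1 * s))"
          by (rule order.trans)
        then have "ennreal (\<bar>f s\<bar> powr (- 1 / \<gamma>)) \<le> ennreal (Kp * (G (- s0 + 1 * s) + G (s0 + - 1 * s)
             + G (- \<theta>1 + 1 * s) + G (\<theta>2 + - 1 * s)))"
          by (rule ennreal_leI)
        also have "\<dots> = ennreal Kp * (g1 s + g2 s + g3 s + g4 s)"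
          unfolding g1_def g2_def g3_def g4_def
          using Kp0 by (simp only: G_def ennreal_mult' Gf_nonneg ennreal_plus add_nonneg_nonneg less_imp_le)
        finally show ?thesis using sin ib(1) by (simp add: neg_pow_integrand_def)
      qed
      have ae: "AE s in lborel. neg_pow_integrand \<gamma> f s * indicator {a..b} s \<le>
          ennreal Kp * (g1 s + g2 s + g3 s + g4 s)"
        using AE_lborel_singleton[of s0] AE_lborel_singleton[of \<theta>1] AE_lborel_singleton[of \<theta>2]
        by eventually_elim (rule pt)
      have "(\<integral>\<^sup>+ s \<in> {a..b}. neg_pow_integrand \<gamma> f s \<partial>lborel) \<le>
          (\<integral>\<^sup>+ s. ennreal Kp * (g1 s + g2 s + g3 s + g4 s) \<partial>lborel)"
        by (rule nn_integral_mono_AE[OF ae])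
      also have "\<dots> = ennreal Kp * (\<integral>\<^sup>+ s. (g1 s + g2 s + g3 s + g4 s) \<partial>lborel)"
        by (rule nn_integral_cmult) measurable
      also have "(\<integral>\<^sup>+ s. (g1 s + g2 s + g3 s + g4 s) \<partial>lborel) =
          (\<integral>\<^sup>+ s. (g1 s + g2 s + g3 s) \<partial>lborel) + integral\<^sup>N lborel g4"
        by (rule nn_integral_add) measurable
      also have "(\<integral>\<^sup>+ s. (g1 s + g2 s + g3 s) \<partial>lborel) =
          (\<integral>\<^sup>+ s. (g1 s + g2 s) \<partial>lborel) + integral\<^sup>N lborel g3"
        by (rule nn_integral_add) measurable
      also have "(\<integral>\<^sup>+ s. (g1 s + g2 s) \<partial>lborel) = integral\<^sup>N lborel g1 + integral\<^sup>N lborel g2"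
        by (rule nn_integral_add) measurable
      also have "ennreal Kp * (integral\<^sup>N lborel g1 + integral\<^sup>N lborel g2 + integral\<^sup>N lborel g3
           + integral\<^sup>N lborel g4) = ennreal (Kp * (4 * I0))"
      proof -
        have "ennreal I0 + ennreal I0 + ennreal I0 + ennreal I0 = ennreal (4 * I0)"
          using I00 by (simp add: ennreal_plus[symmetric])
        then show ?thesis unfolding i1 i2 i3 i4 using Kp0 I00 by (simp add: ennreal_mult)
      qed
      also have "\<dots> \<le> ennreal C" unfolding C_def by (rule ennreal_leI) simp
      finally show ?thesis .
    qed
  qed
qed

end
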